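(* $\oplus_{tot}\mathsf{P}=\oplus\mathsf{P}$.
   Context: An NPTM is a non-deterministic polynomial-time Turing machine. For an NPTM $M$ and input $x$, $acc_M(x)$ is the number of accepting paths of $M$ on $x$ and $tot_M(x)$ is the number of all computation paths of $M$ on $x$ minus $1$. $\#\mathsf{P}=\{acc_M\}$, $\mathsf{TotP}=\{tot_M\}$ over all NPTMs $M$. $\oplus\mathsf{P}$ is the class of languages $L$ for which there is $f\in\#\mathsf{P}$ with $x\in L\iff f(x)$ is odd. $\oplus_{tot}\mathsf{P}$ is defined identically with $f\in\mathsf{TotP}$. *)

theory Defs
  imports Main
begin

text \<open>States and tape symbols are natural numbers below nst / nsym; symbol 0 is the
 blank, input bits False/True are written as symbols 1/2.  The transition
 relation maps (state, scanned symbol) to the list of distinct possible moves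
 (new state, written symbol, head direction).  A configuration without any
 possible move is halting; it is accepting iff its state is accst.\<close>

datatype dir = MoveL | MoveR | Stay

record ntm =
  nst :: nat
  nsym :: nat
  start :: nat
  accst :: nat
  delta :: "nat \<Rightarrow> nat \<Rightarrow> (nat \<times> nat \<times> dir) list"

type_synonym conf = "nat \<times> (int \<Rightarrow> nat) \<times> int"

definition move :: "dir \<Rightarrow> int" where
  "move d = (case d of MoveL \<Rightarrow> -1 | MoveR \<Rightarrow> 1 | Stay \<Rightarrow> 0)"

definition enc :: "bool \<Rightarrow> nat" where
  "enc b = (if b then 2 else 1)"

definition wf_ntm :: "ntm \<Rightarrow> bool" where
  "wf_ntm M \<longleftrightarrow> 3 \<le> nsym M \<and> start M < nst M \<and> accst M < nst M \<and>
     (\<forall>q a. (nst M \<le> q \<or> nsym M \<le> a) \<longrightarrow> delta M q a = []) \<and>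
     (\<forall>q a. distinct (delta M q a) \<and>
        (\<forall>(q', b, d) \<in> set (delta M q a). q' < nst M \<and> b < nsym M))"

definition init :: "ntm \<Rightarrow> bool list \<Rightarrow> conf" where
  "init M x = (start M, (\<lambda>i. if 0 \<le> i \<and> nat i < length x then enc (x ! nat i) else 0), 0)"

definition succs :: "ntm \<Rightarrow> conf \<Rightarrow> conf list" where
  "succs M c = (case c of (q, t, h) \<Rightarrow>
     map (\<lambda>(q', b, d). (q', t(h := b), h + move d)) (delta M q (t h)))"

fun halts_within :: "ntm \<Rightarrow> nat \<Rightarrow> conf \<Rightarrow> bool" where
  "halts_within M 0 c = (succs M c = [])"
| "halts_within M (Suc n) c = (succs M c = [] \<or> (\<forall>c' \<in> set (succs M c). halts_within M n c'))"

fun leaves :: "ntm \<Rightarrow> nat \<Rightarrow> conf \<Rightarrow> nat" where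
  "leaves M 0 c = 1"
| "leaves M (Suc n) c = (if succs M c = [] then 1 else sum_list (map (leaves M n) (succs M c)))"

fun accleaves :: "ntm \<Rightarrow> nat \<Rightarrow> conf \<Rightarrow> nat" where
  "accleaves M 0 c = (if fst c = accst M then 1 else 0)"
| "accleaves M (Suc n) c = (if succs M c = [] then (if fst c = accst M then 1 else 0)
      else sum_list (map (accleaves M n) (succs M c)))"

definition nptm :: "ntm \<Rightarrow> bool" where
  "nptm M \<longleftrightarrow> wf_ntm M \<and> (\<exists>k. \<forall>x. halts_within M (length x ^ k + k) (init M x))"

definition halt_time :: "ntm \<Rightarrow> bool list \<Rightarrow> nat" where
  "halt_time M x = (LEAST n. halts_within M n (init M x))"

definition acc :: "ntm \<Rightarrow> bool list \<Rightarrow> nat" where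
  "acc M x = accleaves M (halt_time M x) (init M x)"

definition tot :: "ntm \<Rightarrow> bool list \<Rightarrow> nat" where
  "tot M x = leaves M (halt_time M x) (init M x) - 1"

definition SharpP :: "(bool list \<Rightarrow> nat) set" where
  "SharpP = {f. \<exists>M. nptm M \<and> f = acc M}"

definition TotP :: "(bool list \<Rightarrow> nat) set" where
  "TotP = {f. \<exists>M. nptm M \<and> f = tot M}"

definition ParityP :: "bool list set set" where
  "ParityP = {L. \<exists>f \<in> SharpP. \<forall>x. x \<in> L \<longleftrightarrow> odd (f x)}"

definition ParityTotP :: "bool list set set" where
  "ParityTotP = {L. \<exists>f \<in> TotP. \<forall>x. x \<in> L \<longleftrightarrow> odd (f x)}"

end

theory Submission
  imports Defs
begin

definition valid :: "ntm \<Rightarrow> conf \<Rightarrow> bool" where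
  "valid M c \<longleftrightarrow> fst c < nst M \<and> (\<forall>i. fst (snd c) i < nsym M)"

lemma valid_init: "wf_ntm M \<Longrightarrow> valid M (init M x)"
  by (auto simp: valid_def init_def wf_ntm_def enc_def)

lemma valid_succs:
  assumes "wf_ntm M" "valid M c" "c' \<in> set (succs M c)"
  shows "valid M c'"
proof -
  obtain q t h where c: "c = (q, t, h)" by (cases c) auto
  from assms(3) obtain q' b d where m: "(q', b, d) \<in> set (delta M q (t h))"
    and c': "c' = (q', t(h := b), h + move d)"
    by (auto simp: succs_def c)
  have "q' < nst M \<and> b < nsym M" using assms(1) m unfolding wf_ntm_def by fastforce
  then show ?thesis using assms(2) by (auto simp: valid_def c c')
qed

lemma succs_nil_iff: "succs M (q, t, h) = [] \<longleftrightarrow> delta M q (t h) = []"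
  by (simp add: succs_def)

lemma halts_mono: "halts_within M n c \<Longrightarrow> n \<le> m \<Longrightarrow> halts_within M m c"
proof (induction n arbitrary: m c)
  case 0
  then show ?case by (cases m) auto
next
  case (Suc n)
  then obtain m' where m: "m = Suc m'" "n \<le> m'" by (cases m) auto
  then show ?case using Suc by auto
qed

lemma halt_nil: "succs M c = [] \<Longrightarrow> halts_within M n c"
  by (cases n) auto

lemma leaves_nil: "succs M c = [] \<Longrightarrow> leaves M n c = 1"
  by (cases n) auto

lemma accleaves_nil: "succs M c = [] \<Longrightarrow> accleaves M n c = (if fst c = accst M then 1 else 0)"
  by (cases n) auto

lemma leaves_stable: "halts_within M n c \<Longrightarrow> n \<le> m \<Longrightarrow> leaves M m c = leaves M n c"
proof (induction n arbitrary: m c)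
  case 0
  then show ?case by (cases m) auto
next
  case (Suc n)
  then obtain m' where m: "m = Suc m'" "n \<le> m'" by (cases m) auto
  show ?case
  proof (cases "succs M c = []")
    case True then show ?thesis by (simp add: leaves_nil)
  next
    case False
    then have "\<forall>c'\<in>set (succs M c). halts_within M n c'" using Suc.prems by auto
    then have "map (leaves M m') (succs M c) = map (leaves M n) (succs M c)"
      using Suc.IH[OF _ m(2)] by (intro map_cong) blast+
    note eq = this
    show ?thesis using False by (simp only: m(1) leaves.simps eq if_False simp_thms)
  qed
qed

lemma accleaves_stable: "halts_within M n c \<Longrightarrow> n \<le> m \<Longrightarrow> accleaves M m c = accleaves M n c"
proof (induction n arbitrary: m c)
  case 0
  then show ?case by (cases m) auto
next
  case (Suc n)
  then obtain m' where m: "m = Suc m'" "n \<le> m'" by (cases m) auto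
  show ?case
  proof (cases "succs M c = []")
    case True then show ?thesis by (simp add: accleaves_nil)
  next
    case False
    then have "\<forall>c'\<in>set (succs M c). halts_within M n c'" using Suc.prems by auto
    then have "map (accleaves M m') (succs M c) = map (accleaves M n) (succs M c)"
      using Suc.IH[OF _ m(2)] by (intro map_cong) blast+
    note eq = this
    show ?thesis using False by (simp only: m(1) accleaves.simps eq if_False simp_thms)
  qed
qed

lemma leaves_pos: "leaves M n c \<ge> 1"
proof (induction n arbitrary: c)
  case 0 then show ?case by simp
next
  case (Suc n)
  show ?case
  proof (cases "succs M c")
    case Nil then show ?thesis by simp
  next
    case (Cons a l)
    then show ?thesis using Suc.IH[of a] by simp
  qed
qed

lemma halt_time_halts: "nptm M \<Longrightarrow> halts_within M (halt_time M x) (init M x)"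
proof -
  assume "nptm M"
  then obtain k where "halts_within M (length x ^ k + k) (init M x)" unfolding nptm_def by blast
  then show ?thesis unfolding halt_time_def by (rule LeastI)
qed

lemma halt_time_le: "halts_within M N (init M x) \<Longrightarrow> halt_time M x \<le> N"
  unfolding halt_time_def by (rule Least_le)

lemma tot_eq: "nptm M \<Longrightarrow> halts_within M N (init M x) \<Longrightarrow> tot M x = leaves M N (init M x) - 1"
proof -
  assume a: "nptm M" "halts_within M N (init M x)"
  show ?thesis unfolding tot_def
    using leaves_stable[OF halt_time_halts[OF a(1)] halt_time_le[OF a(2)]] by simp
qed

lemma acc_eq: "nptm M \<Longrightarrow> halts_within M N (init M x) \<Longrightarrow> acc M x = accleaves M N (init M x)"
proof -
  assume a: "nptm M" "halts_within M N (init M x)"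
  show ?thesis unfolding acc_def
    using accleaves_stable[OF halt_time_halts[OF a(1)] halt_time_le[OF a(2)]] by simp
qed

definition ext :: "ntm \<Rightarrow> (nat \<Rightarrow> nat \<Rightarrow> (nat \<times> nat \<times> dir) list) \<Rightarrow> nat \<Rightarrow> ntm" where
  "ext M f a' = \<lparr>nst = nst M + 2, nsym = nsym M, start = Suc (nst M), accst = a',
     delta = (\<lambda>q a. if a < nsym M \<and> q < nst M then (if delta M q a = [] then f q a else delta M q a)
        else if a < nsym M \<and> q = Suc (nst M) then [(start M, a, Stay), (nst M, a, Stay)] else [])\<rparr>"

definition goodf :: "ntm \<Rightarrow> (nat \<Rightarrow> nat \<Rightarrow> (nat \<times> nat \<times> dir) list) \<Rightarrow> bool" where
  "goodf M f \<longleftrightarrow> (\<forall>q a. distinct (f q a) \<and> (\<forall>(q', b, d) \<in> set (f q a). q' = nst M \<and> (a < nsym M \<longrightarrow> b < nsym M)))"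

lemma wf_ext:
  assumes "wf_ntm M" "goodf M f" "a' < nst M + 2"
  shows "wf_ntm (ext M f a')"
proof -
  have A: "3 \<le> nsym M" "start M < nst M" "\<forall>q a. (nst M \<le> q \<or> nsym M \<le> a) \<longrightarrow> delta M q a = []"
     "\<forall>q a. distinct (delta M q a)"
     "\<forall>q a. \<forall>(q', b, d) \<in> set (delta M q a). q' < nst M \<and> b < nsym M"
    using assms(1) unfolding wf_ntm_def by auto
  have F: "\<forall>q a. distinct (f q a)" "\<forall>q a. \<forall>(q', b, d) \<in> set (f q a). q' = nst M \<and> (a < nsym M \<longrightarrow> b < nsym M)"
    using assms(2) unfolding goodf_def by auto
  have D: "distinct (delta (ext M f a') q a)" for q a
    using A F by (simp add: ext_def)
  have R: "\<forall>(q', b, d) \<in> set (delta (ext M f a') q a). q' < nst (ext M f a') \<and> b < nsym (ext M f a')" for q a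
  proof (cases "a < nsym M \<and> q < nst M")
    case True
    show ?thesis
    proof (cases "delta M q a = []")
      case True
      then show ?thesis using F \<open>a < nsym M \<and> q < nst M\<close> by (fastforce simp: ext_def)
    next
      case False
      then show ?thesis using A \<open>a < nsym M \<and> q < nst M\<close> by (fastforce simp: ext_def)
    qed
  next
    case False
    then show ?thesis using A by (auto simp: ext_def)
  qed
  show ?thesis unfolding wf_ntm_def using A D R assms(3) by (auto simp: ext_def)
qed

lemma succs_ext_h: "succs (ext M f a') (nst M, t, h) = []"
  by (simp add: succs_def ext_def)

lemma succs_ext_valid:
  assumes "valid M c" "succs M c \<noteq> []"
  shows "succs (ext M f a') c = succs M c"
proof -
  obtain q t h where c: "c = (q, t, h)" by (cases c) auto
  show ?thesis using assms by (auto simp: c valid_def succs_def ext_def)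
qed

lemma succs_ext_leaf:
  assumes "valid M c" "succs M c = []"
  shows "succs (ext M f a') c = (case c of (q, t, h) \<Rightarrow>
     map (\<lambda>(q', b, d). (q', t(h := b), h + move d)) (f q (t h)))"
proof -
  obtain q t h where c: "c = (q, t, h)" by (cases c) auto
  show ?thesis using assms by (auto simp: c valid_def succs_def ext_def)
qed

lemma leaf_children:
  assumes "goodf M f" "valid M c" "succs M c = []" "c' \<in> set (succs (ext M f a') c)"
  shows "succs (ext M f a') c' = []"
proof -
  obtain q t h where c: "c = (q, t, h)" by (cases c) auto
  from assms(4) succs_ext_leaf[OF assms(2,3), of f a'] obtain q' b d where
    m: "(q', b, d) \<in> set (f q (t h))" and c': "c' = (q', t(h := b), h + move d)"
    by (auto simp: c)
  have "q' = nst M" using assms(1) m unfolding goodf_def by fastforce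
  then show ?thesis by (simp add: c' succs_ext_h)
qed

lemma halts_ext:
  assumes "wf_ntm M" "goodf M f" "valid M c" "halts_within M n c"
  shows "halts_within (ext M f a') (Suc n) c"
  using assms(3,4)
proof (induction n arbitrary: c)
  case 0
  then have "succs M c = []" by simp
  then have "\<forall>c'\<in>set (succs (ext M f a') c). succs (ext M f a') c' = []"
    using leaf_children[OF assms(2) 0(1)] by blast
  then show ?case by auto
next
  case (Suc n)
  show ?case
  proof (cases "succs M c = []")
    case True
    then have "\<forall>c'\<in>set (succs (ext M f a') c). succs (ext M f a') c' = []"
      using leaf_children[OF assms(2) Suc(2)] by blast
    then show ?thesis by (auto simp: halt_nil)
  next
    case False
    then have "\<forall>c'\<in>set (succs M c). halts_within M n c' \<and> valid M c'"
      using Suc.prems valid_succs[OF assms(1)] by auto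
    then show ?thesis using Suc.IH succs_ext_valid[OF Suc(2) False] by auto
  qed
qed

lemma init_ext_succs:
  assumes "wf_ntm M"
  shows "succs (ext M f a') (init (ext M f a') x) = [init M x, (nst M, fst (snd (init M x)), 0)]"
proof -
  have "fst (snd (init M x)) 0 < nsym M" using valid_init[OF assms] by (simp add: valid_def)
  then show ?thesis
    by (simp add: init_def ext_def succs_def move_def fun_eq_iff)
qed

lemma halts_init_ext:
  assumes "wf_ntm M" "halts_within (ext M f a') n (init M x)"
  shows "halts_within (ext M f a') (Suc n) (init (ext M f a') x)"
proof -
  have h: "halts_within (ext M f a') n (nst M, fst (snd (init M x)), 0)"
    by (rule halt_nil[OF succs_ext_h])
  show ?thesis
    unfolding halts_within.simps(2) init_ext_succs[OF assms(1)] using assms(2) h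
    by (simp only: list.set ball_simps insert_iff empty_iff simp_thms)
qed

lemma leaves_init_ext:
  assumes "wf_ntm M"
  shows "leaves (ext M f a') (Suc n) (init (ext M f a') x) = leaves (ext M f a') n (init M x) + 1"
proof -
  have h: "leaves (ext M f a') n (nst M, fst (snd (init M x)), 0) = 1"
    by (rule leaves_nil[OF succs_ext_h])
  show ?thesis
    unfolding leaves.simps(2) init_ext_succs[OF assms(1)] using h
    by (simp only: list.simps if_False list.map sum_list_simps add_0_right)
qed

lemma accleaves_init_ext:
  assumes "wf_ntm M"
  shows "accleaves (ext M f a') (Suc n) (init (ext M f a') x) = accleaves (ext M f a') n (init M x) + (if nst M = a' then 1 else 0)"
proof -
  have h: "accleaves (ext M f a') n (nst M, fst (snd (init M x)), 0) = (if nst M = a' then 1 else 0)"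
  proof -
    have "succs (ext M f a') (nst M, fst (snd (init M x)), 0) = []" by (rule succs_ext_h)
    from accleaves_nil[OF this, of n] show ?thesis by (simp add: ext_def)
  qed
  show ?thesis
    unfolding accleaves.simps(2) init_ext_succs[OF assms(1)] using h
    by (simp only: list.simps if_False list.map sum_list_simps add_0_right)
qed

lemma sum_list_lemma:
  "(\<forall>x\<in>set xs. f x + g x = 2 * (h x :: nat)) \<Longrightarrow>
    sum_list (map f xs) + sum_list (map g xs) = 2 * sum_list (map h xs)"
  by (induction xs) auto

lemma nptm_ext:
  assumes "nptm M" "goodf M f" "a' < nst M + 2"
  shows "nptm (ext M f a')"
proof -
  have wf: "wf_ntm M" using assms(1) by (simp add: nptm_def)
  obtain k where k: "\<And>x. halts_within M (length x ^ k + k) (init M x)"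
    using assms(1) by (auto simp: nptm_def)
  have "halts_within (ext M f a') (length x ^ (k + 3) + (k + 3)) (init (ext M f a') x)" for x
  proof -
    have h1: "halts_within (ext M f a') (Suc (length x ^ k + k)) (init M x)"
      by (rule halts_ext[OF wf assms(2) valid_init[OF wf] k])
    have h2: "halts_within (ext M f a') (Suc (Suc (length x ^ k + k))) (init (ext M f a') x)"
      by (rule halts_init_ext[OF wf h1])
    have ple: "length x ^ k \<le> Suc (length x ^ (k + 3))"
    proof (cases "length x = 0")
      case True then show ?thesis by (cases k) auto
    next
      case False then show ?thesis
      proof -
        have "length x ^ k \<le> length x ^ (k+3)" using False by (intro power_increasing) (auto simp: Suc_le_eq)
        then show ?thesis by linarith
      qed
    qed
    show ?thesis by (rule halts_mono[OF h2]) (use ple in linarith)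
  qed
  then show ?thesis using wf_ext[OF wf assms(2,3)] by (auto simp: nptm_def)
qed

definition f2 :: "ntm \<Rightarrow> nat \<Rightarrow> nat \<Rightarrow> (nat \<times> nat \<times> dir) list" where
  "f2 M q a = (if q = accst M then [] else [(nst M, a, Stay), (nst M, a, MoveL)])"

definition f1 :: "ntm \<Rightarrow> nat \<Rightarrow> nat \<Rightarrow> (nat \<times> nat \<times> dir) list" where
  "f1 M q a = [(nst M, a, Stay)]"

lemma goodf2: "goodf M (f2 M)" by (auto simp: goodf_def f2_def)
lemma goodf1: "goodf M (f1 M)" by (auto simp: goodf_def f1_def)

lemma key2_leaf:
  assumes "valid M c" "succs M c = []"
  shows "leaves (ext M (f2 M) (accst M)) (Suc n) c + accleaves M n c = 2 * leaves M n c"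
proof -
  obtain q t h where c: "c = (q, t, h)" by (cases c) auto
  have S: "succs (ext M (f2 M) (accst M)) c = map (\<lambda>(q', b, d). (q', t(h := b), h + move d)) (f2 M q (t h))"
    using succs_ext_leaf[OF assms] by (simp add: c)
  show ?thesis
  proof (cases "q = accst M")
    case True
    then have "succs (ext M (f2 M) (accst M)) c = []" using S by (simp add: f2_def)
    then show ?thesis using True assms(2) by (simp add: leaves_nil accleaves_nil c del: leaves.simps accleaves.simps)
  next
    case False
    then have "succs (ext M (f2 M) (accst M)) c = [(nst M, t(h := t h), h + move Stay), (nst M, t(h := t h), h + move MoveL)]"
      using S by (simp add: f2_def)
    then show ?thesis using False assms(2)
      by (simp add: leaves_nil accleaves_nil c succs_ext_h del: accleaves.simps)
  qed
qed

lemma key2: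
  assumes "wf_ntm M" "valid M c" "halts_within M n c"
  shows "leaves (ext M (f2 M) (accst M)) (Suc n) c + accleaves M n c = 2 * leaves M n c"
  using assms(2,3)
proof (induction n arbitrary: c)
  case (0 c)
  have "succs M c = []" using 0(2) by simp
  then show ?case by (rule key2_leaf[OF 0(1)])
next
  case (Suc n c)
  show ?case
  proof (cases "succs M c = []")
    case nil: True
    then show ?thesis using key2_leaf Suc(2) by blast
  next
    case False
    then have "\<forall>c'\<in>set (succs M c). halts_within M n c' \<and> valid M c'"
      using Suc.prems valid_succs[OF assms(1)] by auto
    then have "\<forall>c'\<in>set (succs M c). leaves (ext M (f2 M) (accst M)) (Suc n) c' + accleaves M n c' = 2 * leaves M n c'"
      using Suc.IH by auto
    note S = sum_list_lemma[OF this]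
    have e1: "leaves (ext M (f2 M) (accst M)) (Suc (Suc n)) c = sum_list (map (leaves (ext M (f2 M) (accst M)) (Suc n)) (succs M c))"
      using succs_ext_valid[OF Suc(2) False] False by simp
    have e2: "accleaves M (Suc n) c = sum_list (map (accleaves M n) (succs M c))"
      using False by simp
    have e3: "leaves M (Suc n) c = sum_list (map (leaves M n) (succs M c))"
      using False by simp
    show ?thesis unfolding e1 e2 e3 by (rule S)
  qed
qed

lemma key1_leaf:
  assumes "valid M c" "succs M c = []"
  shows "accleaves (ext M (f1 M) (nst M)) (Suc n) c = leaves M n c"
proof -
  obtain q t h where c: "c = (q, t, h)" by (cases c) auto
  have S: "succs (ext M (f1 M) (nst M)) c = [(nst M, t(h := t h), h + move Stay)]"
    using succs_ext_leaf[OF assms] by (simp add: c f1_def)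
  have "accleaves (ext M (f1 M) (nst M)) n (nst M, t(h := t h), h + move Stay) = 1"
    using accleaves_nil[OF succs_ext_h, where n=n] by (simp add: ext_def)
  then show ?thesis using S assms(2)
    by (simp add: leaves_nil del: leaves.simps)
qed

lemma key1:
  assumes "wf_ntm M" "valid M c" "halts_within M n c"
  shows "accleaves (ext M (f1 M) (nst M)) (Suc n) c = leaves M n c"
  using assms(2,3)
proof (induction n arbitrary: c)
  case (0 c)
  have "succs M c = []" using 0(2) by simp
  then show ?case by (rule key1_leaf[OF 0(1)])
next
  case (Suc n c)
  show ?case
  proof (cases "succs M c = []")
    case nil: True
    then show ?thesis using key1_leaf Suc(2) by blast
  next
    case False
    then have "\<forall>c'\<in>set (succs M c). halts_within M n c' \<and> valid M c'"
      using Suc.prems valid_succs[OF assms(1)] by auto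
    then have "\<forall>c'\<in>set (succs M c). accleaves (ext M (f1 M) (nst M)) (Suc n) c' = leaves M n c'"
      using Suc.IH by blast
    then have S: "map (accleaves (ext M (f1 M) (nst M)) (Suc n)) (succs M c) = map (leaves M n) (succs M c)"
      by (simp only: map_eq_conv)
    have e1: "accleaves (ext M (f1 M) (nst M)) (Suc (Suc n)) c = sum_list (map (accleaves (ext M (f1 M) (nst M)) (Suc n)) (succs M c))"
      using succs_ext_valid[OF Suc(2) False] False by simp
    have e3: "leaves M (Suc n) c = sum_list (map (leaves M n) (succs M c))"
      using False by simp
    show ?thesis unfolding e1 e3 S ..

  qed
qed

theorem proposition8:
  shows "ParityTotP = ParityP"
proof
  show "ParityTotP \<subseteq> ParityP"
  proof
    fix L assume "L \<in> ParityTotP"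
    then obtain M where M: "nptm M" and L: "\<forall>x. x \<in> L \<longleftrightarrow> odd (tot M x)"
      by (auto simp: ParityTotP_def TotP_def)
    have wf: "wf_ntm M" using M by (simp add: nptm_def)
    define M1 where "M1 = ext M (f1 M) (nst M)"
    have M1: "nptm M1" unfolding M1_def by (rule nptm_ext[OF M goodf1]) simp
    have "odd (acc M1 x) \<longleftrightarrow> odd (tot M x)" for x
    proof -
      define N where "N = halt_time M x"
      have hN: "halts_within M N (init M x)" unfolding N_def by (rule halt_time_halts[OF M])
      have hv: "valid M (init M x)" by (rule valid_init[OF wf])
      have S: "succs M1 (init M1 x) = [init M x, (nst M, fst (snd (init M x)), 0)]"
        unfolding M1_def by (rule init_ext_succs[OF wf])
      have h1: "halts_within M1 (Suc N) (init M x)"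
        unfolding M1_def by (rule halts_ext[OF wf goodf1 hv hN])
      have h2: "halts_within M1 (Suc (Suc N)) (init M1 x)"
        unfolding M1_def by (rule halts_init_ext[OF wf h1[unfolded M1_def]])
      have "acc M1 x = accleaves M1 (Suc (Suc N)) (init M1 x)" by (rule acc_eq[OF M1 h2])
      also have "\<dots> = accleaves M1 (Suc N) (init M x) + 1"
        unfolding M1_def by (simp del: accleaves.simps add: accleaves_init_ext[OF wf])
      also have "accleaves M1 (Suc N) (init M x) = leaves M N (init M x)"
        unfolding M1_def by (rule key1[OF wf hv hN])
      finally have a: "acc M1 x = leaves M N (init M x) + 1" .
      have t: "tot M x = leaves M N (init M x) - 1" by (rule tot_eq[OF M hN])
      define l where "l = leaves M N (init M x)"
      have l1: "l \<ge> 1" unfolding l_def by (rule leaves_pos)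
      show ?thesis using a[folded l_def] t[folded l_def] l1 by (cases l) auto
    qed
    moreover have "acc M1 \<in> SharpP" unfolding SharpP_def using M1 by blast
    ultimately show "L \<in> ParityP" unfolding ParityP_def using L by blast
  qed
next
  show "ParityP \<subseteq> ParityTotP"
  proof
    fix L assume "L \<in> ParityP"
    then obtain M where M: "nptm M" and L: "\<forall>x. x \<in> L \<longleftrightarrow> odd (acc M x)"
      by (auto simp: ParityP_def SharpP_def)
    have wf: "wf_ntm M" using M by (simp add: nptm_def)
    have "accst M < nst M" using wf by (simp add: wf_ntm_def)
    define M2 where "M2 = ext M (f2 M) (accst M)"
    have M2: "nptm M2" unfolding M2_def by (rule nptm_ext[OF M goodf2]) (use \<open>accst M < nst M\<close> in simp)
    have "odd (tot M2 x) \<longleftrightarrow> odd (acc M x)" for x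
    proof -
      define N where "N = halt_time M x"
      have hN: "halts_within M N (init M x)" unfolding N_def by (rule halt_time_halts[OF M])
      have hv: "valid M (init M x)" by (rule valid_init[OF wf])
      have S: "succs M2 (init M2 x) = [init M x, (nst M, fst (snd (init M x)), 0)]"
        unfolding M2_def by (rule init_ext_succs[OF wf])
      have h1: "halts_within M2 (Suc N) (init M x)"
        unfolding M2_def by (rule halts_ext[OF wf goodf2 hv hN])
      have h2: "halts_within M2 (Suc (Suc N)) (init M2 x)"
        unfolding M2_def by (rule halts_init_ext[OF wf h1[unfolded M2_def]])
      have "tot M2 x = leaves M2 (Suc (Suc N)) (init M2 x) - 1" by (rule tot_eq[OF M2 h2])
      also have "leaves M2 (Suc (Suc N)) (init M2 x) = leaves M2 (Suc N) (init M x) + 1"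
        unfolding M2_def by (rule leaves_init_ext[OF wf])
      finally have t: "tot M2 x = leaves M2 (Suc N) (init M x)" by (simp only: diff_add_inverse2)
      have k: "leaves M2 (Suc N) (init M x) + accleaves M N (init M x) = 2 * leaves M N (init M x)"
        unfolding M2_def by (rule key2[OF wf hv hN])
      have a: "acc M x = accleaves M N (init M x)" by (rule acc_eq[OF M hN])
      have e: "tot M2 x + acc M x = 2 * leaves M N (init M x)" unfolding t a by (rule k)
      have "even (tot M2 x + acc M x)" unfolding e by (rule dvd_triv_left)
      then show ?thesis by (simp only: even_add)
    qed
    moreover have "tot M2 \<in> TotP" unfolding TotP_def using M2 by blast
    ultimately show "L \<in> ParityTotP" unfolding ParityTotP_def using L by blast
  qed
qed

end
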